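(* Let $I$ be a nonempty open real interval and let $(f,g)\in\mathscr{B}_0(I)$. For $n\in\mathbb{N}$, $x=(x_1,\dots,x_n)\in I^n$ and $\lambda=(\lambda_1,\dots,\lambda_n)\in\Lambda_n$ write \[ B_{g,f}(x,\lambda):=\Big(\frac{g}{f}\Big)^{-1}\!\left(\frac{\sum_{i=1}^n\lambda_ig(x_i)}{\sum_{i=1}^n\lambda_if(x_i)}\right),\qquad A_h(x,\lambda):=h^{-1}\!\left(\frac{\sum_{i=1}^n\lambda_ih(x_i)}{\sum_{i=1}^n\lambda_i}\right), \] and $B_{g,f}(x)$, $A_h(x)$ for the case $\lambda_1=\dots=\lambda_n=1$. Consider the statements: (i) There exists a continuous strictly monotone $h:I\to\mathbb{R}$ such that $B_{g,f}(x,\lambda)=A_h(x,\lambda)$ for all $n\in\mathbb{N}$, $x\in I^n$, $\lambda\in\Lambda_n$. (ii) There exists a continuous strictly monotone $h:I\to\mathbb{R}$ such that $B_{g,f}(x)=A_h(x)$ for all $n\in\mathbb{N}$ and $x\in I^n$. (iii) There exist a continuous strictly monotone $h:I\to\mathbb{R}$ and $n\geq3$ such that $B_{g,f}(x)=A_h(x)$ for all $x\in I^n$. (iv) There exists a continuous strictly monotone $h:I\to\mathbb{R}$ such that $B_{g,f}(x,\lambda)=A_h(x,\lambda)$ for all $x\in I^2$ and $\lambda\in\Lambda_2$. (v) There exist $t\in\,]0,\frac12[\,\cup\,]\frac12,1[\,$ and a continuous strictly monotone $h:I\to\mathbb{R}$ such that $B_{g,f}(x,\lambda)=A_h(x,\lambda)$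 for all $x\in I^2$ with $\lambda=(t,1-t)$. (vi) There exist constants $a,b\in\mathbb{R}$ such that $af+bg=1$ on $I$. (vii) (Applicable when $(f,g)\in\mathscr{B}_2(I)$.) $\Psi_{f,g}=0$ on $I$. Then (i)–(vi) are equivalent, and if in addition $(f,g)\in\mathscr{B}_2(I)$, then (i)–(vii) are all equivalent.
   Context: $\Lambda_n:=\{(\lambda_1,\dots,\lambda_n)\in\mathbb{R}^n:\lambda_1,\dots,\lambda_n\geq0,\ \lambda_1+\dots+\lambda_n>0\}$. $\mathscr{B}_0(I)$ is the class of pairs $(f,g)$ of functions $I\to\mathbb{R}$ such that $f$ is everywhere positive on $I$ and $g/f$ is strictly monotone and continuous on $I$. $\mathscr{B}_2(I)$ is the class of pairs $(f,g)$ such that $f$ is everywhere positive on $I$, $f,g$ are twice continuously differentiable on $I$, and $(g/f)'$ is nowhere zero on $I$. For such pairs, $W^{i,j}_{f,g}:=f^{(i)}g^{(j)}-f^{(j)}g^{(i)}$ and $\Psi_{f,g}:=-W^{2,1}_{f,g}/W^{1,0}_{f,g}$. *)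

theory Defs
  imports "HOL-Analysis.Analysis"
begin

definition cont_strict_mono :: "real set \<Rightarrow> (real \<Rightarrow> real) \<Rightarrow> bool" where
  "cont_strict_mono I h \<longleftrightarrow> continuous_on I h \<and> (strict_mono_on I h \<or> strict_antimono_on I h)"

definition B0 :: "real set \<Rightarrow> (real \<Rightarrow> real) \<Rightarrow> (real \<Rightarrow> real) \<Rightarrow> bool" where
  "B0 I f g \<longleftrightarrow> (\<forall>x\<in>I. f x > 0) \<and> cont_strict_mono I (\<lambda>x. g x / f x)"

definition C2_on :: "real set \<Rightarrow> (real \<Rightarrow> real) \<Rightarrow> bool" where
  "C2_on I f \<longleftrightarrow> (\<forall>x\<in>I. f differentiable (at x)) \<and> (\<forall>x\<in>I. deriv f differentiable (at x))
      \<and> continuous_on I (deriv (deriv f))"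

definition B2 :: "real set \<Rightarrow> (real \<Rightarrow> real) \<Rightarrow> (real \<Rightarrow> real) \<Rightarrow> bool" where
  "B2 I f g \<longleftrightarrow> (\<forall>x\<in>I. f x > 0) \<and> C2_on I f \<and> C2_on I g
      \<and> (\<forall>x\<in>I. deriv (\<lambda>t. g t / f t) x \<noteq> 0)"

definition W :: "nat \<Rightarrow> nat \<Rightarrow> (real \<Rightarrow> real) \<Rightarrow> (real \<Rightarrow> real) \<Rightarrow> real \<Rightarrow> real" where
  "W i j f g x = (deriv ^^ i) f x * (deriv ^^ j) g x - (deriv ^^ j) f x * (deriv ^^ i) g x"

definition Psi :: "(real \<Rightarrow> real) \<Rightarrow> (real \<Rightarrow> real) \<Rightarrow> real \<Rightarrow> real" where
  "Psi f g x = - W 2 1 f g x / W 1 0 f g x"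

text \<open>x \<in> I^n, represented as a function on indices 0..n-1.\<close>
definition in_power :: "real set \<Rightarrow> nat \<Rightarrow> (nat \<Rightarrow> real) \<Rightarrow> bool" where
  "in_power I n x \<longleftrightarrow> (\<forall>i<n. x i \<in> I)"

definition Lambda :: "nat \<Rightarrow> (nat \<Rightarrow> real) \<Rightarrow> bool" where
  "Lambda n l \<longleftrightarrow> (\<forall>i<n. l i \<ge> 0) \<and> (\<Sum>i<n. l i) > 0"

definition Bmean :: "real set \<Rightarrow> (real \<Rightarrow> real) \<Rightarrow> (real \<Rightarrow> real) \<Rightarrow> nat \<Rightarrow> (nat \<Rightarrow> real) \<Rightarrow> (nat \<Rightarrow> real) \<Rightarrow> real" where
  "Bmean I g f n x l = the_inv_into I (\<lambda>t. g t / f t)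
      ((\<Sum>i<n. l i * g (x i)) / (\<Sum>i<n. l i * f (x i)))"

definition Amean :: "real set \<Rightarrow> (real \<Rightarrow> real) \<Rightarrow> nat \<Rightarrow> (nat \<Rightarrow> real) \<Rightarrow> (nat \<Rightarrow> real) \<Rightarrow> real" where
  "Amean I h n x l = the_inv_into I h ((\<Sum>i<n. l i * h (x i)) / (\<Sum>i<n. l i))"

definition stmt_i where
  "stmt_i I f g \<longleftrightarrow> (\<exists>h. cont_strict_mono I h \<and>
     (\<forall>n\<ge>1. \<forall>x l. in_power I n x \<and> Lambda n l \<longrightarrow> Bmean I g f n x l = Amean I h n x l))"

definition stmt_ii where
  "stmt_ii I f g \<longleftrightarrow> (\<exists>h. cont_strict_mono I h \<and>
     (\<forall>n\<ge>1. \<forall>x. in_power I n x \<longrightarrow> Bmean I g f n x (\<lambda>_. 1) = Amean I h n x (\<lambda>_. 1)))"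

definition stmt_iii where
  "stmt_iii I f g \<longleftrightarrow> (\<exists>h n. cont_strict_mono I h \<and> n \<ge> 3 \<and>
     (\<forall>x. in_power I n x \<longrightarrow> Bmean I g f n x (\<lambda>_. 1) = Amean I h n x (\<lambda>_. 1)))"

definition stmt_iv where
  "stmt_iv I f g \<longleftrightarrow> (\<exists>h. cont_strict_mono I h \<and>
     (\<forall>x l. in_power I 2 x \<and> Lambda 2 l \<longrightarrow> Bmean I g f 2 x l = Amean I h 2 x l))"

definition stmt_v where
  "stmt_v I f g \<longleftrightarrow> (\<exists>t h. t \<in> {0<..<1/2} \<union> {1/2<..<1} \<and> cont_strict_mono I h \<and>
     (\<forall>x. in_power I 2 x \<longrightarrow>
        Bmean I g f 2 x (\<lambda>i. if i = 0 then t else 1 - t) = Amean I h 2 x (\<lambda>i. if i = 0 then t else 1 - t)))"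

definition stmt_vi where
  "stmt_vi I f g \<longleftrightarrow> (\<exists>a b::real. \<forall>x\<in>I. a * f x + b * g x = 1)"

definition stmt_vii where
  "stmt_vii I f g \<longleftrightarrow> (\<forall>x\<in>I. Psi f g x = 0)"

end

theory Submission imports Defs begin

lemma periodic_const:
  fixes g :: "real \<Rightarrow> real"
  assumes cg: "continuous_on {a0..b0} g"
    and per: "\<And>e. e > 0 \<Longrightarrow> \<exists>p. 0 < p \<and> p < e \<and> (\<forall>x. a0 \<le> x \<longrightarrow> x + p \<le> b0 \<longrightarrow> g (x + p) = g x)"
    and x: "x \<in> {a0..b0}"
  shows "g x = g a0"
proof (rule ccontr)
  assume ne: "g x \<noteq> g a0"
  define \<eta> where "\<eta> = \<bar>g x - g a0\<bar>"
  have eta: "\<eta> > 0" using ne by (simp add: \<eta>_def)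
  obtain d where d: "d > 0" and dd: "\<And>x'. x' \<in> {a0..b0} \<Longrightarrow> dist x' x < d \<Longrightarrow> dist (g x') (g x) < \<eta>"
    using cg x eta unfolding continuous_on_iff by metis
  obtain p where p: "0 < p" "p < d" and pp: "\<And>y. a0 \<le> y \<Longrightarrow> y + p \<le> b0 \<Longrightarrow> g (y + p) = g y"
    using per[OF d] by blast
  define N where "N = nat \<lfloor>(x - a0) / p\<rfloor>"
  have x0: "a0 \<le> x" "x \<le> b0" using x by auto
  have Nle: "real N * p \<le> x - a0"
  proof -
    have "real N = of_int \<lfloor>(x - a0) / p\<rfloor>" using x0 p by (simp add: N_def)
    also have "\<dots> \<le> (x - a0) / p" by simp
    finally show ?thesis using p by (simp add: field_simps)
  qed
  have Ngt: "x - a0 < real N * p + p"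
  proof -
    have "(x - a0) / p < of_int \<lfloor>(x - a0) / p\<rfloor> + 1" by linarith
    also have "of_int \<lfloor>(x - a0) / p\<rfloor> = real N" using x0 p by (simp add: N_def)
    finally show ?thesis using p by (simp add: field_simps)
  qed
  have ind: "\<And>n. n \<le> N \<Longrightarrow> g (a0 + real n * p) = g a0"
  proof -
    fix n show "n \<le> N \<Longrightarrow> g (a0 + real n * p) = g a0"
    proof (induction n)
      case 0 then show ?case by simp
    next
      case (Suc n)
      have "real (Suc n) * p \<le> real N * p" using Suc.prems p by (simp add: mult_right_mono)
      then have "a0 + real n * p + p \<le> b0" using Nle x0 by (simp add: algebra_simps)
      moreover have "a0 \<le> a0 + real n * p" using p by simp
      ultimately have "g (a0 + real n * p + p) = g (a0 + real n * p)" using pp by blast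
      then show ?case using Suc by (simp add: algebra_simps)
    qed
  qed
  define y where "y = a0 + real N * p"
  have gy: "g y = g a0" using ind[of N] by (simp add: y_def)
  have ya: "y \<in> {a0..b0}" using Nle x0 p by (auto simp: y_def)
  have "dist y x < d" using Nle Ngt p by (simp add: y_def dist_real_def)
  then have "dist (g y) (g x) < \<eta>" using dd ya by blast
  then show False using gy by (simp add: \<eta>_def dist_real_def abs_minus_commute)
qed


definition Ed :: "(real \<Rightarrow> real) \<Rightarrow> (real \<Rightarrow> real) \<Rightarrow> real \<Rightarrow> real \<Rightarrow> real" where
  "Ed F G a b = F a * G b - G a * F b"

lemma Ed_anti: "Ed F G a b = - Ed F G b a" by (simp add: Ed_def)
lemma Ed_same[simp]: "Ed F G a a = 0" by (simp add: Ed_def)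
lemma Ed_pluecker: "Ed F G a b * Ed F G c d - Ed F G a c * Ed F G b d + Ed F G a d * Ed F G b c = 0"
  by (simp add: Ed_def algebra_simps)

context
  fixes F G :: "real \<Rightarrow> real" and H :: "real set" and t :: real
  assumes Hint: "is_interval H" and Hopen: "open H"
    and t0: "0 < t" and t1: "t < 1/2"
    and cF: "continuous_on H F" and cG: "continuous_on H G"
    and nz: "\<And>a b. a \<in> H \<Longrightarrow> b \<in> H \<Longrightarrow> a \<noteq> b \<Longrightarrow> Ed F G a b \<noteq> 0"
    and eqn: "\<And>p q. p \<in> H \<Longrightarrow> q \<in> H \<Longrightarrow>
        t * Ed F G (t*p+(1-t)*q) p + (1-t) * Ed F G (t*p+(1-t)*q) q = 0"
begin

definition "kk = t / (1 - t)"

lemma kk_pos: "0 < kk" and kk_lt1: "kk < 1"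
  using t0 t1 by (auto simp: kk_def field_simps)

lemma Hbetween: "a \<in> H \<Longrightarrow> b \<in> H \<Longrightarrow> a \<le> x \<Longrightarrow> x \<le> b \<Longrightarrow> x \<in> H"
  using Hint unfolding is_interval_1 by blast

lemma scale1:
  assumes "w + z \<in> H" "w - kk * z \<in> H"
  shows "Ed F G w (w - kk * z) = - kk * Ed F G w (w + z)"
proof -
  have s: "(1 - t) * kk = t" using t1 by (simp add: kk_def)
  have w: "t * (w + z) + (1 - t) * (w - kk * z) = w"
    using t1 by (simp add: kk_def field_simps)
  have "t * Ed F G w (w + z) + (1 - t) * Ed F G w (w - kk * z) = 0"
    using eqn[OF assms] by (simp only: w)
  then show ?thesis using t1 unfolding kk_def by (simp add: field_simps)
qed

lemma scale2:
  assumes "w + y \<in> H" "w - y / kk \<in> H"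
  shows "Ed F G w (w - y / kk) = - (1 / kk) * Ed F G w (w + y)"
proof -
  have "Ed F G w (w - kk * (- y / kk)) = - kk * Ed F G w (w + (- y / kk))"
    by (rule scale1) (use assms kk_pos in auto)
  then have "Ed F G w (w + y) = - kk * Ed F G w (w - y / kk)"
    using kk_pos by simp
  then show ?thesis using kk_pos by (simp add: field_simps)
qed

lemma scale_sq:
  assumes "a \<in> H" "a + d \<in> H" "a - kk*d \<in> H" "0 \<le> d"
  shows "Ed F G a (a + kk^2*d) = kk^2 * Ed F G a (a + d)"
proof -
  have s1: "Ed F G a (a - kk*d) = - kk * Ed F G a (a + d)"
    by (rule scale1) (use assms in auto)
  have m: "a + kk^2*d \<in> H"
  proof -
    have "kk*kk \<le> 1" using kk_pos kk_lt1 by (simp add: mult_le_one)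
    then have "kk*kk*d \<le> d" using assms(4) kk_pos by (simp add: mult_left_le_one_le)
    then show ?thesis using Hbetween[OF assms(1,2)] kk_pos assms(4) by (simp add: power2_eq_square)
  qed
  have "Ed F G a (a - kk * (-kk*d)) = - kk * Ed F G a (a + (-kk*d))"
    by (rule scale1) (use assms m in \<open>auto simp: power2_eq_square mult.assoc\<close>)
  then show ?thesis using s1 by (simp add: power2_eq_square mult.assoc)
qed

lemma trans1:
  assumes "a \<in> H" "a + d \<in> H" "a - (1+kk)*d \<in> H" "0 \<le> d"
  shows "Ed F G (a - (1+kk)*d) (a - kk*d) = Ed F G a (a + d)"
proof -
  have m: "a - kk*d \<in> H"
    by (rule Hbetween[OF assms(3,1)]) (use kk_pos assms(4) in \<open>auto simp: algebra_simps\<close>)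
  have s1: "Ed F G a (a - kk*d) = - kk * Ed F G a (a + d)"
    by (rule scale1) (use assms m in auto)
  have s2: "Ed F G (a - kk*d) ((a - kk*d) - (kk*d) / kk) = - (1 / kk) * Ed F G (a - kk*d) ((a - kk*d) + kk*d)"
    by (rule scale2) (use assms m kk_pos in \<open>auto simp: algebra_simps\<close>)
  have e1: "(a - kk*d) - (kk*d) / kk = a - (1+kk)*d" using kk_pos by (simp add: algebra_simps)
  have e2: "(a - kk*d) + kk*d = a" by simp
  have "Ed F G (a - kk*d) (a - (1+kk)*d) = - (1/kk) * (- Ed F G a (a - kk*d))"
    using s2 unfolding e1 e2 by (metis Ed_anti)
  also have "\<dots> = - Ed F G a (a + d)" using s1 kk_pos by simp
  finally show ?thesis by (metis Ed_anti minus_minus)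
qed

lemma scale_pow:
  assumes "a \<in> H" "a + d \<in> H" "a - kk*d \<in> H" "0 \<le> d"
  shows "Ed F G a (a + kk^(2*n)*d) = kk^(2*n) * Ed F G a (a + d)"
proof (induction n)
  case 0 then show ?case by simp
next
  case (Suc n)
  have p0: "0 \<le> kk^(2*n)" "kk^(2*n) \<le> 1" using kk_pos kk_lt1 by (auto simp: power_le_one)
  have h1: "a + kk^(2*n)*d \<in> H"
    by (rule Hbetween[OF assms(1,2)]) (use p0 assms(4) in \<open>auto simp: mult_left_le_one_le\<close>)
  have h2: "a - kk*(kk^(2*n)*d) \<in> H"
    by (rule Hbetween[OF assms(3,1)]) (use p0 assms(4) kk_pos in \<open>auto simp: mult_left_le_one_le mult_left_mono\<close>)
  have "Ed F G a (a + kk^2*(kk^(2*n)*d)) = kk^2 * Ed F G a (a + kk^(2*n)*d)"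
    by (rule scale_sq) (use assms h1 h2 p0 in auto)
  moreover have eq: "kk^(2*Suc n) = kk^2 * kk^(2*n)" by (simp add: power_add[symmetric])
  ultimately show ?case by (simp only: eq mult.assoc Suc.IH)
qed

lemma transl_inv:
  assumes sub: "{\<alpha> - \<mu>..\<beta> + \<mu>} \<subseteq> H" and d: "0 < d" "d \<le> \<mu>" and a: "\<alpha> \<le> a" "a + d \<le> \<beta>"
  shows "Ed F G a (a + d) = Ed F G \<alpha> (\<alpha> + d)"
proof -
  define g where "g x = Ed F G x (x + d)" for x
  have cg: "continuous_on {\<alpha>..\<beta> - d} g"
  proof -
    have s1: "{\<alpha>..\<beta> - d} \<subseteq> H" using sub d by auto
    have s2: "(\<lambda>x. x + d) ` {\<alpha>..\<beta> - d} \<subseteq> H" using sub d by auto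
    have c1: "continuous_on {\<alpha>..\<beta> - d} (\<lambda>x. F (x + d))"
      by (rule continuous_on_compose2[OF cF _ s2]) (intro continuous_intros)
    have c2: "continuous_on {\<alpha>..\<beta> - d} (\<lambda>x. G (x + d))"
      by (rule continuous_on_compose2[OF cG _ s2]) (intro continuous_intros)
    show ?thesis unfolding g_def Ed_def
      by (intro continuous_intros continuous_on_subset[OF cF s1] continuous_on_subset[OF cG s1] c1 c2)
  qed
  have per: "\<exists>p. 0 < p \<and> p < e \<and> (\<forall>x. \<alpha> \<le> x \<longrightarrow> x + p \<le> \<beta> - d \<longrightarrow> g (x + p) = g x)" if e: "e > 0" for e
  proof -
    have "kk^2 < 1" using kk_pos kk_lt1 by (simp add: power_less_one_iff)
    then obtain n where n: "(kk^2)^n < e / ((1+kk)*d)"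
      using real_arch_pow_inv[of "e / ((1+kk)*d)" "kk^2"] e d kk_pos by auto
    define d' where "d' = kk^(2*n)*d"
    define p where "p = (1+kk)*d'"
    have d'pos: "0 < d'" using d kk_pos by (simp add: d'_def)
    have d'le: "d' \<le> d" using d kk_pos kk_lt1 by (simp add: d'_def power_le_one mult_left_le_one_le)
    have "kk^(2*n) < e/((1+kk)*d)" using n by (simp add: power_mult)
    then have "kk^(2*n) * ((1+kk)*d) < e" using d kk_pos by (simp add: pos_less_divide_eq)
    then have "p < e" by (simp add: p_def d'_def algebra_simps)
    moreover have "0 < p" using d'pos kk_pos by (simp add: p_def)
    moreover have "g (x + p) = g x" if x: "\<alpha> \<le> x" "x + p \<le> \<beta> - d" for x
    proof -
      have kd: "kk * d \<le> \<mu>" using kk_lt1 kk_pos d by (meson dual_order.trans less_imp_le mult_left_le_one_le)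
      have kd0: "0 \<le> kk*d" using kk_pos d by simp
      have "x \<in> {\<alpha> - \<mu>..\<beta> + \<mu>}" "x + d \<in> {\<alpha> - \<mu>..\<beta> + \<mu>}" "x - kk*d \<in> {\<alpha> - \<mu>..\<beta> + \<mu>}"
           "x + p \<in> {\<alpha> - \<mu>..\<beta> + \<mu>}" "x + p + d \<in> {\<alpha> - \<mu>..\<beta> + \<mu>}" "x + p - kk*d \<in> {\<alpha> - \<mu>..\<beta> + \<mu>}"
        using x d kd kd0 \<open>0 < p\<close> by auto
      then have H1: "x \<in> H" "x + d \<in> H" "x - kk*d \<in> H"
        and H2: "x + p \<in> H" "x + p + d \<in> H" "x + p - kk*d \<in> H" using sub by auto
      have A: "Ed F G x (x + d') = kk^(2*n) * g x"
        unfolding d'_def g_def by (rule scale_pow) (use H1 d in auto)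
      have B: "Ed F G (x+p) (x + p + d') = kk^(2*n) * g (x+p)"
        unfolding d'_def g_def by (rule scale_pow) (use H2 d in auto)
      have H3: "x + p + d' \<in> H" by (rule Hbetween[OF H2(1) H2(2)]) (use d'pos d'le in auto)
      have H4: "x + p - (1+kk)*d' \<in> H" using H1 by (simp add: p_def)
      have C: "Ed F G (x + p - (1+kk)*d') (x + p - kk*d') = Ed F G (x+p) (x + p + d')"
        by (rule trans1) (use H2 H3 H4 d'pos in auto)
      have e3: "x + p - (1+kk)*d' = x" and e4: "x + p - kk*d' = x + d'" by (simp_all add: p_def algebra_simps)
      have "Ed F G x (x + d') = Ed F G (x+p) (x + p + d')" using C unfolding e3 e4 .
      then have "kk^(2*n) * g x = kk^(2*n) * g (x+p)" unfolding A B .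
      then show ?thesis using kk_pos by simp
    qed
    ultimately show ?thesis by blast
  qed
  have "g a = g \<alpha>"
    by (rule periodic_const[OF cg per]) (use a in auto)
  then show ?thesis by (simp add: g_def)
qed

lemma local_linear:
  assumes sub: "{\<alpha> - \<mu>..\<beta> + \<mu>} \<subseteq> H" and ab: "\<alpha> < \<beta>" and mu: "0 < \<mu>"
  shows "\<exists>C \<delta>. C \<noteq> 0 \<and> 0 < \<delta> \<and> (\<forall>a d. 0 < d \<longrightarrow> d \<le> \<delta> \<longrightarrow> \<alpha> \<le> a \<longrightarrow> a + d \<le> \<beta> \<longrightarrow> Ed F G a (a + d) = C * d)"
proof -
  define D where "D = min \<mu> (\<beta> - \<alpha>)"
  have D0: "0 < D" using ab mu by (simp add: D_def)
  define \<psi> where "\<psi> d = Ed F G \<alpha> (\<alpha> + d)" for d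
  define \<sigma> where "\<sigma> x = \<psi> x / x" for x
  have TI: "Ed F G a (a + d) = \<psi> d" if "0 < d" "d \<le> D" "\<alpha> \<le> a" "a + d \<le> \<beta>" for a d
    unfolding \<psi>_def by (rule transl_inv[OF sub]) (use that in \<open>auto simp: D_def\<close>)
  have inH: "x \<in> H" if "\<alpha> - \<mu> \<le> x" "x \<le> \<beta> + \<mu>" for x using sub that by auto
  have SC: "\<psi> (kk^2 * d) = kk^2 * \<psi> d" if "0 < d" "d \<le> D" for d
  proof -
    have "kk * d \<le> \<mu>" using that kk_pos kk_lt1 by (smt (verit) D_def min.bounded_iff mult_left_le_one_le)
    moreover have "0 < kk * d" using that kk_pos by simp
    moreover have "d \<le> \<mu>" "d \<le> \<beta> - \<alpha>" using that by (auto simp: D_def)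
    ultimately have "\<alpha> \<in> H" "\<alpha> + d \<in> H" "\<alpha> - kk*d \<in> H"
      using \<open>0 < \<mu>\<close> ab that by (auto intro!: inH)
    then show ?thesis unfolding \<psi>_def using that by (intro scale_sq) auto
  qed
  have psinz: "\<psi> d \<noteq> 0" if "0 < d" "d \<le> D" for d
    unfolding \<psi>_def by (rule nz) (use that mu in \<open>auto intro!: inH simp: D_def\<close>)
  have sig_sc: "\<sigma> (kk^2 * d) = \<sigma> d" if "0 < d" "d \<le> D" for d
    using SC[OF that] kk_pos by (simp add: \<sigma>_def)
  have sig_pow: "\<sigma> (kk^(2*n) * d) = \<sigma> d" if "0 < d" "d \<le> D" for d n
  proof (induction n)
    case 0 then show ?case by simp
  next
    case (Suc n)
    have p0: "0 < kk^(2*n)" "kk^(2*n) \<le> 1" using kk_pos kk_lt1 by (auto simp: power_le_one)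
    have "\<sigma> (kk^2 * (kk^(2*n) * d)) = \<sigma> (kk^(2*n) * d)"
      by (rule sig_sc) (use that p0 in \<open>auto simp: mult_left_le_one_le intro: order_trans[of _ d]\<close>)
    moreover have "kk^(2*Suc n) = kk^2 * kk^(2*n)" by (simp add: power_add[symmetric])
    ultimately show ?case using Suc.IH by (simp only: mult.assoc)
  qed
  have sine: "\<psi> x ^ 2 - \<psi> y ^ 2 + \<psi> (x + y) * \<psi> (y - x) = 0" if "0 < x" "x < y" "x + y \<le> D" for x y
  proof -
    have DB: "D \<le> \<beta> - \<alpha>" by (simp add: D_def)
    have e1: "Ed F G (\<alpha> + y) (\<alpha> + x + y) = \<psi> x"
      using TI[of x "\<alpha> + y"] that DB by (simp add: add.commute add.left_commute)
    have e2: "Ed F G (\<alpha> + x) (\<alpha> + x + y) = \<psi> y"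
      using TI[of y "\<alpha> + x"] that DB by (simp add: add.assoc)
    have e3: "Ed F G (\<alpha> + x) (\<alpha> + y) = \<psi> (y - x)"
      using TI[of "y - x" "\<alpha> + x"] that DB by simp
    have e4: "Ed F G \<alpha> (\<alpha> + x + y) = \<psi> (x + y)" by (simp add: \<psi>_def add.assoc)
    have "Ed F G \<alpha> (\<alpha> + x) * Ed F G (\<alpha> + y) (\<alpha> + x + y) - Ed F G \<alpha> (\<alpha> + y) * Ed F G (\<alpha> + x) (\<alpha> + x + y)
        + Ed F G \<alpha> (\<alpha> + x + y) * Ed F G (\<alpha> + x) (\<alpha> + y) = 0" by (rule Ed_pluecker)
    then show ?thesis unfolding e1 e2 e3 e4 by (simp add: \<psi>_def power2_eq_square)
  qed
  have csig: "continuous_on {a..b} \<sigma>" if "0 < a" "b \<le> D" for a b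
  proof -
    have s1: "(\<lambda>x. \<alpha> + x) ` {a..b} \<subseteq> H" using that mu by (auto intro!: inH simp: D_def)
    have c1: "continuous_on {a..b} (\<lambda>x. F (\<alpha> + x))"
      by (rule continuous_on_compose2[OF cF _ s1]) (intro continuous_intros)
    have c2: "continuous_on {a..b} (\<lambda>x. G (\<alpha> + x))"
      by (rule continuous_on_compose2[OF cG _ s1]) (intro continuous_intros)
    show ?thesis unfolding \<sigma>_def \<psi>_def Ed_def
      by (intro continuous_intros c1 c2) (use that in auto)
  qed
  have kk2: "0 < kk^2" "kk^2 < 1" using kk_pos kk_lt1 by (auto simp: power_less_one_iff)
  have kD: "kk^2 * D \<le> D" using kk2 D0 by simp
  obtain y0 where y0: "y0 \<in> {kk^2*D..D}" and y0max: "\<And>y. y \<in> {kk^2*D..D} \<Longrightarrow> \<sigma> y ^ 2 \<le> \<sigma> y0 ^ 2"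
  proof -
    have "continuous_on {kk^2*D..D} \<sigma>" by (rule csig) (use kk2 D0 in auto)
    then have "continuous_on {kk^2*D..D} (\<lambda>y. \<sigma> y ^ 2)" by (intro continuous_intros)
    moreover have "{kk^2*D..D} \<noteq> {}" using kD by simp
    ultimately show ?thesis using continuous_attains_sup[of "{kk^2*D..D}" "\<lambda>y. \<sigma> y ^ 2"] that by auto
  qed
  define M where "M = \<sigma> y0 ^ 2"
  have y0pos: "0 < y0" using y0 kk2 D0 by (auto intro: less_le_trans[of 0 "kk^2*D"])
  have bnd_ind: "\<forall>x. kk^(2*(n+1))*D \<le> x \<longrightarrow> x \<le> D \<longrightarrow> \<sigma> x ^ 2 \<le> M" for n
  proof (induction n)
    case 0 then show ?case using y0max by (simp add: M_def)
  next
    case (Suc n)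
    show ?case
    proof (intro allI impI)
      fix x assume x1: "kk^(2*(Suc n+1))*D \<le> x" and x2: "x \<le> D"
      show "\<sigma> x ^ 2 \<le> M"
      proof (cases "kk^(2*(n+1))*D \<le> x")
        case True then show ?thesis using Suc.IH x2 by blast
      next
        case False
        define x' where "x' = x / kk^2"
        have xx: "x = kk^2 * x'" using kk2 by (simp add: x'_def)
        have pe: "kk^(2*(Suc n+1)) = kk^2 * kk^(2*(n+1))" by (simp add: power_add[symmetric])
        have "kk^2 * (kk^(2*(n+1))*D) \<le> kk^2 * x'" using x1 unfolding pe xx by (simp add: mult.assoc)
        then have l1: "kk^(2*(n+1))*D \<le> x'" using kk2 by simp
        have pe2: "kk^(2*(n+1)) = kk^2 * kk^(2*n)" by (simp add: power_add[symmetric])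
        have "kk^2 * x' < kk^2 * (kk^(2*n)*D)" using False unfolding xx pe2 by (simp add: mult.assoc)
        then have "x' < kk^(2*n)*D" using kk2 by simp
        moreover have "kk^(2*n)*D \<le> D" using kk_pos kk_lt1 D0 by (simp add: power_le_one mult_left_le_one_le)
        ultimately have l2: "x' \<le> D" by simp
        have x'pos: "0 < x'" using xx kk2 x1 kk_pos D0 by (smt (verit) l1 mult_pos_pos zero_less_power)
        have "\<sigma> x = \<sigma> x'" using sig_sc[OF x'pos l2] xx by simp
        then show ?thesis using Suc.IH l1 l2 by simp
      qed
    qed
  qed
  have bnd: "\<sigma> x ^ 2 \<le> M" if xpos: "0 < x" "x \<le> D" for x
  proof -
    obtain n where n: "(kk^2)^n < x / D" using real_arch_pow_inv[of "x / D" "kk^2"] xpos D0 kk2 by auto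
    have "kk^(2*(n+1)) \<le> kk^(2*n)" using kk_pos kk_lt1 by (intro power_decreasing) auto
    also have "kk^(2*n) < x / D" using n by (simp add: power_mult)
    finally have "kk^(2*(n+1)) * D \<le> x" using D0 by (simp add: pos_less_divide_eq less_imp_le)
    then show ?thesis using bnd_ind xpos by blast
  qed
  obtain n1 where n1: "(kk^2)^n1 < 1/2" using real_arch_pow_inv[of "1/2" "kk^2"] kk2 by auto
  define y1 where "y1 = kk^(2*n1) * y0"
  have y0D: "y0 \<le> D" using y0 by simp
  have y1pos: "0 < y1" using y0pos kk_pos by (simp add: y1_def)
  have y1le: "2 * y1 \<le> D"
  proof -
    have "kk^(2*n1) < 1/2" using n1 by (simp add: power_mult)
    then have "2 * kk^(2*n1) * y0 \<le> y0" using y0pos by (simp add: mult_le_cancel_right1 less_imp_le)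
    then show ?thesis using y0D by (simp add: y1_def mult.assoc)
  qed
  have sy1: "\<sigma> y1 = \<sigma> y0" unfolding y1_def by (rule sig_pow) (use y0pos y0D in auto)
  have Mpos: "0 < M" using psinz[OF y0pos y0D] y0pos by (simp add: M_def \<sigma>_def)
  have sqM: "\<sigma> x ^ 2 = M" if "0 < x" "x \<le> y1" for x
  proof (cases "x = y1")
    case True then show ?thesis using sy1 by (simp add: M_def)
  next
    case False
    then have xl: "x < y1" using that by simp
    have S: "\<psi> x ^ 2 - \<psi> y1 ^ 2 + \<psi> (x + y1) * \<psi> (y1 - x) = 0" by (rule sine) (use that xl y1le in auto)
    have px: "\<psi> z = z * \<sigma> z" if "z > 0" for z using that by (simp add: \<sigma>_def)
    have p1: "\<psi> x = x * \<sigma> x" "\<psi> y1 = y1 * \<sigma> y1" "\<psi> (x + y1) = (x + y1) * \<sigma> (x + y1)"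
      "\<psi> (y1 - x) = (y1 - x) * \<sigma> (y1 - x)" using that xl y1pos by (simp_all add: \<sigma>_def)
    have "x^2 * \<sigma> x ^ 2 - y1^2 * M + (y1^2 - x^2) * (\<sigma> (x + y1) * \<sigma> (y1 - x))
        = \<psi> x ^ 2 - \<psi> y1 ^ 2 + \<psi> (x + y1) * \<psi> (y1 - x)"
      unfolding p1 M_def sy1[symmetric] by (simp add: power2_eq_square algebra_simps)
    then have S2: "x^2 * \<sigma> x ^ 2 - y1^2 * M + (y1^2 - x^2) * (\<sigma> (x + y1) * \<sigma> (y1 - x)) = 0"
      using S by simp
    have b1: "\<sigma> (x + y1) ^ 2 \<le> M" by (rule bnd) (use that xl y1le in auto)
    have b2: "\<sigma> (y1 - x) ^ 2 \<le> M" by (rule bnd) (use that xl y1le in auto)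
    have "\<sigma> (x + y1) * \<sigma> (y1 - x) \<le> M"
    proof -
      have "2 * (\<sigma> (x + y1) * \<sigma> (y1 - x)) \<le> \<sigma> (x + y1) ^ 2 + \<sigma> (y1 - x) ^ 2"
        using sum_squares_bound[of "\<sigma> (x + y1)" "\<sigma> (y1 - x)"] by (simp add: power2_eq_square)
      then show ?thesis using b1 b2 by simp
    qed
    moreover have "0 \<le> y1^2 - x^2" using that xl by (simp add: power_mono)
    ultimately have "(y1^2 - x^2) * (\<sigma> (x + y1) * \<sigma> (y1 - x)) \<le> (y1^2 - x^2) * M"
      by (simp add: mult_left_mono)
    then have "x^2 * M \<le> x^2 * \<sigma> x ^ 2" using S2 by (simp add: algebra_simps)
    then have "M \<le> \<sigma> x ^ 2" using that by simp
    moreover have "\<sigma> x ^ 2 \<le> M" by (rule bnd) (use that y1le y1pos in auto)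
    ultimately show ?thesis by simp
  qed
  define C where "C = \<sigma> y1"
  have C2: "C^2 = M" using sqM[of y1] y1pos by (simp add: C_def)
  have sigC: "\<sigma> x = C" if "0 < x" "x \<le> y1" for x
  proof (rule ccontr)
    assume ne: "\<sigma> x \<noteq> C"
    have "\<sigma> x ^ 2 = C ^ 2" using sqM[OF that] C2 by simp
    then have neg: "\<sigma> x = - C" using ne by (simp add: power2_eq_iff)
    have cs: "continuous_on {x..y1} \<sigma>" by (rule csig) (use that y1le y1pos in auto)
    have "\<exists>z. x \<le> z \<and> z \<le> y1 \<and> \<sigma> z = 0"
    proof (cases "C > 0")
      case True
      then show ?thesis using IVT'[of \<sigma> x 0 y1] cs neg that by (simp add: C_def)
    next
      case False
      then show ?thesis using IVT2'[of \<sigma> y1 0 x] cs neg that by (simp add: C_def)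
    qed
    then obtain z where z: "x \<le> z" "z \<le> y1" "\<sigma> z = 0" by blast
    then have "\<sigma> z ^ 2 = M" using sqM[of z] that by simp
    then show False using z Mpos by simp
  qed
  show ?thesis
  proof (intro exI conjI allI impI)
    show "C \<noteq> 0" using C2 Mpos by auto
    show "0 < y1" by (rule y1pos)
    fix a d assume "0 < d" "d \<le> y1" "\<alpha> \<le> a" "a + d \<le> \<beta>"
    moreover have "d \<le> D" using \<open>d \<le> y1\<close> y1le y1pos by simp
    ultimately show "Ed F G a (a + d) = C * d"
      using TI[of d a] sigC[of d] by (simp add: \<sigma>_def field_simps)
  qed
qed

lemma global_linear:
  assumes sub: "{\<alpha> - \<mu>..\<beta> + \<mu>} \<subseteq> H" and ab: "\<alpha> < \<beta>" and mu: "0 < \<mu>"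
  shows "\<exists>C. C \<noteq> 0 \<and> (\<forall>a b. \<alpha> \<le> a \<longrightarrow> a \<le> b \<longrightarrow> b \<le> \<beta> \<longrightarrow> Ed F G a b = C * (b - a))"
proof -
  obtain C \<delta> where C: "C \<noteq> 0" and d: "0 < \<delta>"
    and loc: "\<And>a d. 0 < d \<Longrightarrow> d \<le> \<delta> \<Longrightarrow> \<alpha> \<le> a \<Longrightarrow> a + d \<le> \<beta> \<Longrightarrow> Ed F G a (a + d) = C * d"
    using local_linear[OF assms] by blast
  have ind: "\<forall>a b. \<alpha> \<le> a \<longrightarrow> a < b \<longrightarrow> b \<le> \<beta> \<longrightarrow> b - a \<le> (3/2)^n * \<delta> \<longrightarrow> Ed F G a b = C * (b - a)" for n
  proof (induction n)
    case 0
    show ?case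
    proof (intro allI impI)
      fix a b :: real assume h: "\<alpha> \<le> a" "a < b" "b \<le> \<beta>" "b - a \<le> (3/2)^0 * \<delta>"
      have "Ed F G a (a + (b - a)) = C * (b - a)" by (rule loc) (use h in auto)
      then show "Ed F G a b = C * (b - a)" by simp
    qed
  next
    case (Suc n)
    show ?case
    proof (intro allI impI)
      fix a b :: real assume h: "\<alpha> \<le> a" "a < b" "b \<le> \<beta>" "b - a \<le> (3/2)^Suc n * \<delta>"
      define L where "L = b - a"
      have L0: "0 < L" using h by (simp add: L_def)
      have L1: "2 * L / 3 \<le> (3/2)^n * \<delta>" using h(4) by (simp add: L_def field_simps)
      define m1 where "m1 = a + L/3"
      define m2 where "m2 = a + 2*L/3"
      have IH: "\<And>x y. \<alpha> \<le> x \<Longrightarrow> x < y \<Longrightarrow> y \<le> \<beta> \<Longrightarrow> y - x \<le> 2 * L / 3 \<Longrightarrow> Ed F G x y = C * (y - x)"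
        using Suc.IH L1 by (meson order_trans)
      have b: "b = a + L" by (simp add: L_def)
      have e1: "Ed F G a m1 = C * (L/3)" by (subst IH) (use h L0 in \<open>auto simp: m1_def b\<close>)
      have e2: "Ed F G m2 b = C * (L/3)" by (subst IH) (use h L0 in \<open>auto simp: m2_def b\<close>)
      have e3: "Ed F G a m2 = C * (2*L/3)" by (subst IH) (use h L0 in \<open>auto simp: m2_def b\<close>)
      have e4: "Ed F G m1 b = C * (2*L/3)" by (subst IH) (use h L0 in \<open>auto simp: m1_def b\<close>)
      have e5: "Ed F G m1 m2 = C * (L/3)" by (subst IH) (use h L0 in \<open>auto simp: m1_def m2_def b\<close>)
      have "Ed F G a m1 * Ed F G m2 b - Ed F G a m2 * Ed F G m1 b + Ed F G a b * Ed F G m1 m2 = 0"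
        by (rule Ed_pluecker)
      then have "Ed F G a b * (C * (L/3)) = C * L * (C * (L/3))"
        unfolding e1 e2 e3 e4 e5 by (simp add: algebra_simps power2_eq_square)
      then have "Ed F G a b = C * L" using C L0 by simp
      then show "Ed F G a b = C * (b - a)" by (simp add: L_def)
    qed
  qed
  show ?thesis
  proof (intro exI conjI allI impI)
    show "C \<noteq> 0" by (rule C)
    fix a b assume h: "\<alpha> \<le> a" "a \<le> b" "b \<le> \<beta>"
    show "Ed F G a b = C * (b - a)"
    proof (cases "a = b")
      case True then show ?thesis by simp
    next
      case False
      obtain n where n: "(\<beta> - \<alpha>) / \<delta> < (3/2)^n" using real_arch_pow[of "3/2::real"] by auto
      then have "\<beta> - \<alpha> \<le> (3/2)^n * \<delta>" using d by (simp add: divide_less_eq less_imp_le)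
      then show ?thesis using ind[of n] h False by auto
    qed
  qed
qed

lemma core_result:
  assumes Hne: "H \<noteq> {}"
  shows "\<exists>A B. \<forall>u\<in>H. A * F u + B * G u = 1"
proof -
  obtain u0 where u0: "u0 \<in> H" using Hne by blast
  obtain e where e: "e > 0" "ball u0 e \<subseteq> H" using Hopen u0 open_contains_ball by blast
  define u1 where "u1 = u0 + e/2"
  have u1: "u1 \<in> H" using e by (auto simp: u1_def dist_real_def intro!: subsetD[OF e(2)])
  have u01: "u0 < u1" using e by (simp add: u1_def)
  define E01 where "E01 = Ed F G u0 u1"
  have E01: "E01 \<noteq> 0" unfolding E01_def by (rule nz) (use u0 u1 u01 in auto)
  define A where "A = (G u1 - G u0) / E01"
  define B where "B = (F u0 - F u1) / E01"
  show ?thesis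
  proof (intro exI ballI)
    fix u assume u: "u \<in> H"
    define lo where "lo = min u u0"
    define hi where "hi = max u u1"
    have lohi: "lo \<in> H" "hi \<in> H" unfolding lo_def hi_def using u u0 u1 by (cases "u \<le> u0"; simp add: min_def; cases "u \<le> u1"; simp add: max_def)+
    obtain e1 where e1: "e1 > 0" "ball lo e1 \<subseteq> H" using Hopen lohi open_contains_ball by blast
    obtain e2 where e2: "e2 > 0" "ball hi e2 \<subseteq> H" using Hopen lohi open_contains_ball by blast
    define \<mu> where "\<mu> = min e1 e2 / 2"
    have mu: "0 < \<mu>" using e1 e2 by (simp add: \<mu>_def)
    have "lo - \<mu> \<in> H" using e1 mu by (auto simp: \<mu>_def dist_real_def intro!: subsetD[OF e1(2)])
    moreover have "hi + \<mu> \<in> H" using e2 mu by (auto simp: \<mu>_def dist_real_def intro!: subsetD[OF e2(2)])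
    ultimately have sub: "{lo - \<mu>..hi + \<mu>} \<subseteq> H"
      by (intro subsetI, rule Hbetween[of "lo - \<mu>" "hi + \<mu>"]) auto
    have lh: "lo < hi" using u01 by (auto simp: lo_def hi_def)
    obtain C where C: "\<And>a b. lo \<le> a \<Longrightarrow> a \<le> b \<Longrightarrow> b \<le> hi \<Longrightarrow> Ed F G a b = C * (b - a)"
      using global_linear[OF sub lh mu] by blast
    have lin: "Ed F G a b = C * (b - a)" if "a \<in> {lo..hi}" "b \<in> {lo..hi}" for a b
    proof (cases "a \<le> b")
      case True then show ?thesis using C that by auto
    next
      case False
      then have "Ed F G b a = C * (a - b)" using C that by auto
      then show ?thesis by (subst Ed_anti) (simp add: algebra_simps)
    qed
    have r: "u0 \<in> {lo..hi}" "u1 \<in> {lo..hi}" "u \<in> {lo..hi}" using u01 by (auto simp: lo_def hi_def)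
    have "Ed F G u0 u + Ed F G u u1 = E01"
      unfolding E01_def using lin[OF r(1) r(3)] lin[OF r(3) r(2)] lin[OF r(1) r(2)] by (simp add: algebra_simps)
    moreover have "A * F u + B * G u = (Ed F G u0 u + Ed F G u u1) / E01"
      using E01 unfolding A_def B_def Ed_def by (simp add: divide_simps) (simp add: algebra_simps)
    ultimately show "A * F u + B * G u = 1" using E01 by simp
  qed
qed

end

lemma csm_inj: "cont_strict_mono I h \<Longrightarrow> inj_on h I"
  unfolding cont_strict_mono_def using strict_mono_on_imp_inj_on strict_antimono_iff_antimono by blast

lemma csm_cont: "cont_strict_mono I h \<Longrightarrow> continuous_on I h"
  unfolding cont_strict_mono_def by blast

lemma csm_image_interval: "is_interval I \<Longrightarrow> cont_strict_mono I h \<Longrightarrow> is_interval (h ` I)"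
  using is_interval_connected_1 connected_continuous_image csm_cont by blast

lemma interval_comb:
  fixes S :: "real set"
  assumes "is_interval S" "a \<in> S" "b \<in> S" "0 \<le> u" "u \<le> 1"
  shows "u * a + (1 - u) * b \<in> S"
  using convexD[of S a b u "1 - u"] assms is_interval_convex_1 by auto

lemma sum2: "(\<Sum>i<2. f i) = f 0 + f (1::nat)"
  by (simp add: numeral_2_eq_2)

lemma v_imp_vi:
  fixes I :: "real set" and f g :: "real \<Rightarrow> real"
  assumes Iint: "is_interval I" and Iopen: "open I" and Ine: "I \<noteq> {}"
    and B: "B0 I f g" and V: "stmt_v I f g"
  shows "stmt_vi I f g"
proof -
  obtain t h where t: "t \<in> {0<..<1/2} \<union> {1/2<..<1}" and hc: "cont_strict_mono I h"
    and heq: "\<And>x. in_power I 2 x \<Longrightarrow>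
        Bmean I g f 2 x (\<lambda>i. if i = 0 then t else 1 - t) = Amean I h 2 x (\<lambda>i. if i = 0 then t else 1 - t)"
    using V unfolding stmt_v_def by blast
  define \<phi> where "\<phi> x = g x / f x" for x
  have fpos: "\<And>x. x \<in> I \<Longrightarrow> f x > 0" and pc: "cont_strict_mono I \<phi>"
    using B unfolding B0_def \<phi>_def by auto
  have gphi: "g x = \<phi> x * f x" if "x \<in> I" for x using fpos[OF that] by (simp add: \<phi>_def)
  have injh: "inj_on h I" and injp: "inj_on \<phi> I" using csm_inj hc pc by auto
  have hcont: "continuous_on I h" and pcont: "continuous_on I \<phi>" using csm_cont hc pc by auto
  have t01: "0 < t" "t < 1" using t by auto
  define H where "H = h ` I"
  define hinv where "hinv = the_inv_into I h"
  have Hint: "is_interval H" unfolding H_def by (rule csm_image_interval[OF Iint hc])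
  have Pint: "is_interval (\<phi> ` I)" by (rule csm_image_interval[OF Iint pc])
  have Hopen: "open H"
    using injective_eq_1d_open_map_UNIV[OF hcont Iint] injh Iopen unfolding H_def by blast
  have Hne: "H \<noteq> {}" using Ine by (simp add: H_def)
  have hinvI: "hinv p \<in> I" if "p \<in> H" for p
    unfolding hinv_def using the_inv_into_into[OF injh] that by (auto simp: H_def)
  have hhinv: "h (hinv p) = p" if "p \<in> H" for p
    unfolding hinv_def using f_the_inv_into_f[OF injh] that by (auto simp: H_def)
  have hinvh: "hinv (h x) = x" if "x \<in> I" for x
    unfolding hinv_def using the_inv_into_f_f[OF injh that] .
  have hinvc: "continuous_on H hinv"
  proof (rule continuous_on_inverse_open_map[OF hcont])
    show "h ` I = H" by (simp add: H_def)
    show "\<And>x. x \<in> I \<Longrightarrow> hinv (h x) = x" by (rule hinvh)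
    fix U assume "openin (top_of_set I) U"
    then have "open U" "U \<subseteq> I" using openin_open_eq[OF Iopen] by auto
    then have "open (h ` U)" using injective_eq_1d_open_map_UNIV[OF hcont Iint] injh by blast
    moreover have "h ` U \<subseteq> H" using \<open>U \<subseteq> I\<close> by (auto simp: H_def)
    ultimately show "openin (top_of_set H) (h ` U)" using openin_open_eq[OF Hopen] by blast
  qed
  define F where "F u = f (hinv u)" for u
  define G where "G u = g (hinv u)" for u
  define r where "r u = \<phi> (hinv u)" for u
  have Fpos: "F u > 0" if "u \<in> H" for u using fpos hinvI that by (simp add: F_def)
  have GrF: "G u = r u * F u" if "u \<in> H" for u using gphi hinvI that by (simp add: F_def G_def r_def)
  have rc: "continuous_on H r"
    unfolding r_def by (rule continuous_on_compose2[OF pcont hinvc]) (use hinvI in auto)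
  have EdF: "Ed F G a b = F a * F b * (r b - r a)" if "a \<in> H" "b \<in> H" for a b
    using GrF that by (simp add: Ed_def algebra_simps)
  have KE: "t * f x * (\<phi> x - \<phi> (hinv (t * h x + (1-t) * h y))) + (1-t) * f y * (\<phi> y - \<phi> (hinv (t * h x + (1-t) * h y))) = 0"
    if x: "x \<in> I" and y: "y \<in> I" for x y
  proof -
    define X where "X i = (if i = 0 then x else y)" for i :: nat
    define l where "l i = (if i = 0 then t else 1 - t)" for i :: nat
    have XI: "in_power I 2 X" unfolding in_power_def X_def using x y by auto
    have e: "Bmean I g f 2 X l = Amean I h 2 X l" using heq[OF XI] unfolding l_def[abs_def] .
    define m where "m = hinv (t * h x + (1-t) * h y)"
    have Am: "Amean I h 2 X l = m"
      unfolding Amean_def sum2 by (simp add: X_def l_def m_def hinv_def)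
    define R where "R = (t * g x + (1-t) * g y) / (t * f x + (1-t) * f y)"
    have Bm: "Bmean I g f 2 X l = the_inv_into I \<phi> R"
      unfolding Bmean_def sum2 by (simp add: X_def l_def R_def \<phi>_def[abs_def])
    have den: "t * f x + (1-t) * f y > 0" using fpos[OF x] fpos[OF y] t01
      by (simp add: add_pos_pos)
    define lam where "lam = t * f x / (t * f x + (1-t) * f y)"
    have lam: "0 \<le> lam" "lam \<le> 1" using den fpos[OF x] fpos[OF y] t01
      by (auto simp: lam_def divide_simps)
    have one_minus: "1 - lam = (1-t) * f y / (t * f x + (1-t) * f y)"
      using den by (simp add: lam_def field_simps)
    have "lam * \<phi> x + (1 - lam) * \<phi> y = (t * f x * \<phi> x + (1-t) * f y * \<phi> y) / (t * f x + (1-t) * f y)"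
      unfolding one_minus unfolding lam_def by (simp add: add_divide_distrib)
    moreover have "R = (t * f x * \<phi> x + (1-t) * f y * \<phi> y) / (t * f x + (1-t) * f y)"
      unfolding R_def gphi[OF x] gphi[OF y] by (simp add: mult_ac)
    ultimately have "R = lam * \<phi> x + (1 - lam) * \<phi> y" by simp
    then have RI: "R \<in> \<phi> ` I" using interval_comb[OF Pint _ _ lam] x y by auto
    have "\<phi> m = R" using e Am Bm f_the_inv_into_f[OF injp RI] by simp
    then have "\<phi> m * (t * f x + (1-t) * f y) = t * g x + (1-t) * g y" using den by (simp add: R_def)
    then show ?thesis unfolding m_def[symmetric] gphi[OF x] gphi[OF y] by (simp add: algebra_simps)
  qed
  have wH: "t * p + (1-t) * q \<in> H" if "p \<in> H" "q \<in> H" for p q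
    using interval_comb[OF Hint that] t01 by simp
  have KH: "t * F p * (r p - r (t*p + (1-t)*q)) + (1-t) * F q * (r q - r (t*p + (1-t)*q)) = 0"
    if p: "p \<in> H" and q: "q \<in> H" for p q
    using KE[OF hinvI[OF p] hinvI[OF q]] by (simp add: hhinv p q F_def r_def)
  have eqH: "t * Ed F G (t*p+(1-t)*q) p + (1-t) * Ed F G (t*p+(1-t)*q) q = 0"
    if p: "p \<in> H" and q: "q \<in> H" for p q
  proof -
    define w where "w = t*p+(1-t)*q"
    have w: "w \<in> H" using wH[OF p q] by (simp add: w_def)
    have "t * Ed F G w p + (1-t) * Ed F G w q = F w * (t * F p * (r p - r w) + (1-t) * F q * (r q - r w))"
      unfolding EdF[OF w p] EdF[OF w q] by (simp add: algebra_simps)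
    also have "\<dots> = 0" using KH[OF p q] by (simp add: w_def)
    finally show ?thesis by (simp add: w_def)
  qed
  have nzH: "Ed F G a b \<noteq> 0" if "a \<in> H" "b \<in> H" "a \<noteq> b" for a b
  proof -
    have "hinv a \<noteq> hinv b" using that hhinv by metis
    then have "r a \<noteq> r b" using injp hinvI that unfolding r_def inj_on_def by blast
    then show ?thesis using EdF[OF that(1,2)] Fpos[OF that(1)] Fpos[OF that(2)] by simp
  qed
  have Fc: "continuous_on H F"
  proof (rule continuous_at_imp_continuous_on, rule ballI)
    fix q0 assume q0: "q0 \<in> H"
    obtain e where e: "e > 0" "ball q0 e \<subseteq> H" using Hopen q0 open_contains_ball by blast
    define p where "p = q0 + e/2"
    have p: "p \<in> H" using e by (auto simp: p_def dist_real_def intro!: subsetD[OF e(2)])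
    have pq: "p \<noteq> q0" using e by (simp add: p_def)
    define w where "w q = t*p + (1-t)*q" for q
    have wHq: "w q \<in> H" if "q \<in> H" for q using wH[OF p that] by (simp add: w_def)
    have rne: "r q - r (w q) \<noteq> 0" if "q \<in> H - {p}" for q
    proof -
      have "w q \<noteq> q" using that t01 by (auto simp: w_def algebra_simps)
      then have "Ed F G (w q) q \<noteq> 0" using nzH wHq that by auto
      then show ?thesis using EdF[OF wHq] that by auto
    qed
    have Feq: "F q = - (t * F p * (r p - r (w q))) / ((1-t) * (r q - r (w q)))" if "q \<in> H - {p}" for q
    proof -
      have "t * F p * (r p - r (w q)) + (1-t) * F q * (r q - r (w q)) = 0"
        using KH[OF p] that by (simp add: w_def)
      moreover have "(1-t) * F q * (r q - r (w q)) = F q * ((1-t) * (r q - r (w q)))" by (simp add: mult_ac)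
      ultimately have "F q * ((1-t) * (r q - r (w q))) = - (t * F p * (r p - r (w q)))" by linarith
      moreover have dn: "(1-t) * (r q - r (w q)) \<noteq> 0" using rne[OF that] t01 by simp
      ultimately have "F q = (- (t * F p * (r p - r (w q)))) / ((1-t) * (r q - r (w q)))"
        by (metis nonzero_mult_div_cancel_right)
      then show ?thesis by simp
    qed
    have cw: "continuous_on (H - {p}) (\<lambda>q. r (w q))"
    proof -
      have "w ` (H - {p}) \<subseteq> H" using wHq by auto
      moreover have "continuous_on (H - {p}) w" unfolding w_def by (intro continuous_intros)
      ultimately show ?thesis using continuous_on_compose2[OF rc] by blast
    qed
    have crq: "continuous_on (H - {p}) r" using rc by (rule continuous_on_subset) auto
    have "continuous_on (H - {p}) (\<lambda>q. - (t * F p * (r p - r (w q))) / ((1-t) * (r q - r (w q))))"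
      using t01 rne by (intro continuous_intros cw crq) auto
    then have "continuous_on (H - {p}) F" by (rule continuous_on_eq) (simp add: Feq)
    moreover have "open (H - {p})" using Hopen by auto
    ultimately show "isCont F q0" using q0 pq continuous_on_eq_continuous_at by blast
  qed
  have Gc: "continuous_on H G"
  proof -
    have "continuous_on H (\<lambda>u. r u * F u)" by (intro continuous_intros rc Fc)
    then show ?thesis by (rule continuous_on_eq) (simp add: GrF)
  qed
  obtain A B where AB: "\<forall>u\<in>H. A * F u + B * G u = 1"
  proof (cases "t < 1/2")
    case True
    show ?thesis
      using core_result[OF Hint Hopen t01(1) True Fc Gc nzH eqH Hne] that by blast
  next
    case False
    then have t2: "0 < 1 - t" "1 - t < 1/2" using t by auto
    have eq2: "(1-t) * Ed F G ((1-t)*p+(1-(1-t))*q) p + (1-(1-t)) * Ed F G ((1-t)*p+(1-(1-t))*q) q = 0"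
      if "p \<in> H" "q \<in> H" for p q
      using eqH[OF that(2,1)] by (simp add: algebra_simps)
    show ?thesis
      using core_result[OF Hint Hopen t2 Fc Gc nzH eq2 Hne] that by blast
  qed
  show ?thesis unfolding stmt_vi_def
  proof (intro exI ballI)
    fix x assume x: "x \<in> I"
    have "h x \<in> H" using x by (simp add: H_def)
    then show "A * f x + B * g x = 1" using AB hinvh[OF x] by (auto simp: F_def G_def)
  qed
qed


lemma recip_anti:
  fixes p :: "real \<Rightarrow> real"
  assumes pos: "\<And>x. x \<in> I \<Longrightarrow> 0 < p x" and m: "strict_mono_on I p"
  shows "strict_antimono_on I (\<lambda>x. 1 / p x)"
  unfolding monotone_on_def
proof (intro ballI impI)
  fix x y assume h: "x \<in> I" "y \<in> I" "x < y"
  then have "p x < p y" using m by (simp add: monotone_on_def)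
  then show "1 / p y < 1 / p x" using pos h frac_less2[of 1 1 "p x" "p y"] by simp
qed

lemma recip_mono:
  fixes p :: "real \<Rightarrow> real"
  assumes pos: "\<And>x. x \<in> I \<Longrightarrow> 0 < p x" and m: "strict_antimono_on I p"
  shows "strict_mono_on I (\<lambda>x. 1 / p x)"
  unfolding monotone_on_def
proof (intro ballI impI)
  fix x y assume h: "x \<in> I" "y \<in> I" "x < y"
  then have "p y < p x" using m by (simp add: monotone_on_def)
  then show "1 / p x < 1 / p y" using pos h frac_less2[of 1 1 "p y" "p x"] by simp
qed

lemma affine_mono_cases:
  fixes \<phi> :: "real \<Rightarrow> real"
  assumes "strict_mono_on I \<phi> \<or> strict_antimono_on I \<phi>" and b: "b \<noteq> 0"
  shows "strict_mono_on I (\<lambda>x. a + b * \<phi> x) \<or> strict_antimono_on I (\<lambda>x. a + b * \<phi> x)"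
proof (cases "b > 0")
  case True
  then show ?thesis using assms(1) by (auto simp: monotone_on_def)
next
  case False
  then have "b < 0" using b by simp
  then show ?thesis using assms(1) by (auto simp: monotone_on_def mult_less_cancel_left_neg)
qed

lemma vi_imp_i:
  fixes I :: "real set" and f g :: "real \<Rightarrow> real"
  assumes Iint: "is_interval I" and B: "B0 I f g" and VI: "stmt_vi I f g"
  shows "stmt_i I f g"
proof -
  obtain a b where ab: "\<And>x. x \<in> I \<Longrightarrow> a * f x + b * g x = 1" using VI unfolding stmt_vi_def by blast
  define \<phi> where "\<phi> x = g x / f x" for x
  have fpos: "\<And>x. x \<in> I \<Longrightarrow> f x > 0" and pc: "cont_strict_mono I \<phi>"
    using B unfolding B0_def \<phi>_def by auto
  have gphi: "g x = \<phi> x * f x" if "x \<in> I" for x using fpos[OF that] by (simp add: \<phi>_def)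
  have injp: "inj_on \<phi> I" using csm_inj pc by auto
  show ?thesis
  proof (cases "b = 0")
    case True
    have af: "f x = 1 / a" if "x \<in> I" for x
    proof -
      have e: "a * f x = 1" using ab[OF that] True by simp
      then have "a \<noteq> 0" by auto
      then show ?thesis using e by (simp add: eq_divide_eq mult.commute)
    qed
    show ?thesis unfolding stmt_i_def
    proof (intro exI conjI allI impI)
      show "cont_strict_mono I \<phi>" by (rule pc)
      fix n :: nat and x l assume "1 \<le> n" and h: "in_power I n x \<and> Lambda n l"
      have xi: "\<And>i. i < n \<Longrightarrow> x i \<in> I" using h by (simp add: in_power_def)
      have "a * f (x 0) = 1" using ab[OF xi[of 0]] True \<open>1 \<le> n\<close> by simp
      then have a0: "a \<noteq> 0" by auto
      have s1: "(\<Sum>i<n. l i * g (x i)) = (\<Sum>i<n. l i * \<phi> (x i)) / a"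
        unfolding sum_divide_distrib by (rule sum.cong) (auto simp: gphi af xi)
      have s2: "(\<Sum>i<n. l i * f (x i)) = (\<Sum>i<n. l i) / a"
        unfolding sum_divide_distrib by (rule sum.cong) (auto simp: af xi)
      show "Bmean I g f n x l = Amean I \<phi> n x l"
        unfolding Bmean_def Amean_def s1 s2 using a0 by (simp add: \<phi>_def[abs_def])
    qed
  next
    case False
    have den: "a + b * \<phi> x > 0" "f x = 1 / (a + b * \<phi> x)" if "x \<in> I" for x
    proof -
      have e: "f x * (a + b * \<phi> x) = 1" using ab[OF that] gphi[OF that] by (simp add: algebra_simps)
      have fx: "f x \<noteq> 0" using fpos[OF that] by simp
      have e2: "a + b * \<phi> x = 1 / f x" using e fx by (simp add: eq_divide_eq mult.commute)
      then show "a + b * \<phi> x > 0" using fpos[OF that] by simp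
      show "f x = 1 / (a + b * \<phi> x)" using e2 by simp
    qed
    have fcsm: "cont_strict_mono I f"
    proof -
      have "continuous_on I (\<lambda>x. 1 / (a + b * \<phi> x))"
        using csm_cont[OF pc] by (intro continuous_intros) (auto dest: den(1))
      then have c: "continuous_on I f" by (rule continuous_on_eq) (simp add: den)
      have "strict_mono_on I (\<lambda>x. a + b * \<phi> x) \<or> strict_antimono_on I (\<lambda>x. a + b * \<phi> x)"
        using affine_mono_cases pc False unfolding cont_strict_mono_def by blast
      then have "strict_antimono_on I (\<lambda>x. 1 / (a + b * \<phi> x)) \<or> strict_mono_on I (\<lambda>x. 1 / (a + b * \<phi> x))"
      proof
        assume m: "strict_mono_on I (\<lambda>x. a + b * \<phi> x)"
        have "strict_antimono_on I (\<lambda>x. 1 / (a + b * \<phi> x))"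
          by (rule recip_anti[OF _ m]) (rule den(1))
        then show ?thesis ..
      next
        assume m: "strict_antimono_on I (\<lambda>x. a + b * \<phi> x)"
        have "strict_mono_on I (\<lambda>x. 1 / (a + b * \<phi> x))"
          by (rule recip_mono[OF _ m]) (rule den(1))
        then show ?thesis ..
      qed
      moreover have "strict_mono_on I f = strict_mono_on I (\<lambda>x. 1 / (a + b * \<phi> x))"
        "strict_antimono_on I f = strict_antimono_on I (\<lambda>x. 1 / (a + b * \<phi> x))"
        by (auto simp: monotone_on_def den)
      ultimately show ?thesis using c unfolding cont_strict_mono_def by auto
    qed
    have injf: "inj_on f I" using csm_inj fcsm by auto
    have Fint: "is_interval (f ` I)" by (rule csm_image_interval[OF Iint fcsm])
    show ?thesis unfolding stmt_i_def
    proof (intro exI conjI allI impI)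
      show "cont_strict_mono I f" by (rule fcsm)
      fix n :: nat and x l assume n1: "1 \<le> n" and h: "in_power I n x \<and> Lambda n l"
      have xi: "\<And>i. i < n \<Longrightarrow> x i \<in> I" using h by (simp add: in_power_def)
      have l0: "\<And>i. i < n \<Longrightarrow> 0 \<le> l i" and S0: "(\<Sum>i<n. l i) > 0" using h by (auto simp: Lambda_def)
      define S where "S = (\<Sum>i<n. l i)"
      define Sf where "Sf = (\<Sum>i<n. l i * f (x i))"
      define Sg where "Sg = (\<Sum>i<n. l i * g (x i))"
      have Spos: "S > 0" using S0 by (simp add: S_def)
      have Sfpos: "Sf > 0"
      proof -
        have "\<exists>j<n. l j > 0"
        proof (rule ccontr)
          assume nj: "\<not> (\<exists>j<n. l j > 0)"
          have "\<forall>i<n. l i = 0"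
          proof (intro allI impI)
            fix i assume i: "i < n"
            then have "\<not> l i > 0" using nj by blast
            then show "l i = 0" using l0[OF i] by linarith
          qed
          then have "S = 0" by (simp add: S_def)
          then show False using Spos by simp
        qed
        then obtain j where j: "j < n" "l j > 0" by blast
        have "l j * f (x j) \<le> Sf" unfolding Sf_def
        proof (rule member_le_sum)
          fix i assume "i \<in> {..<n} - {j}"
          then have i: "i < n" by simp
          show "0 \<le> l i * f (x i)" using l0[OF i] fpos[OF xi[OF i]] by simp
        qed (use j in auto)
        moreover have "l j * f (x j) > 0" using j fpos xi by simp
        ultimately show ?thesis by simp
      qed
      have R2: "Sf / S \<in> f ` I"
      proof -
        have "(\<Sum>i<n. (l i / S) *\<^sub>R f (x i)) \<in> f ` I"
        proof (rule convex_sum)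
          show "convex (f ` I)" using Fint is_interval_convex_1 by blast
          show "(\<Sum>i<n. l i / S) = 1" using Spos by (simp add: S_def sum_divide_distrib[symmetric])
        qed (use l0 Spos xi in auto)
        moreover have "(\<Sum>i<n. (l i / S) *\<^sub>R f (x i)) = Sf / S"
          by (simp add: Sf_def sum_divide_distrib)
        ultimately show ?thesis by simp
      qed
      define y where "y = the_inv_into I f (Sf / S)"
      have yI: "y \<in> I" unfolding y_def using the_inv_into_into[OF injf R2] by simp
      have fy: "f y = Sf / S" unfolding y_def using f_the_inv_into_f[OF injf R2] .
      have Sg: "Sg = (S - a * Sf) / b"
      proof -
        have "Sg = (\<Sum>i<n. (l i - a * (l i * f (x i))) / b)"
          unfolding Sg_def
        proof (rule sum.cong)
          fix i assume "i \<in> {..<n}"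
          then have "a * f (x i) + b * g (x i) = 1" using ab xi by auto
          then have gx: "g (x i) = (1 - a * f (x i)) / b" using False by (simp add: field_simps)
          have "l i * g (x i) = l i * ((1 - a * f (x i)) / b)" by (simp only: gx)
          also have "\<dots> = (l i - a * (l i * f (x i))) / b" using False by (simp add: field_simps)
          finally show "l i * g (x i) = (l i - a * (l i * f (x i))) / b" .
        qed simp
        also have "\<dots> = (S - a * Sf) / b"
          by (simp add: S_def Sf_def sum_divide_distrib[symmetric] sum_subtractf sum_distrib_left)
        finally show ?thesis .
      qed
      have py: "\<phi> y = Sg / Sf"
      proof -
        have "a * f y + b * g y = 1" using ab[OF yI] .
        then have "g y = (1 - a * f y) / b" using False by (simp add: field_simps)
        then have "\<phi> y = (1 - a * (Sf / S)) / b / (Sf / S)" by (simp add: \<phi>_def fy)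
        also have "\<dots> = Sg / Sf" unfolding Sg using Spos Sfpos False by (simp add: field_simps)
        finally show ?thesis .
      qed
      have "Bmean I g f n x l = the_inv_into I \<phi> (Sg / Sf)"
        by (simp add: Bmean_def Sg_def Sf_def \<phi>_def[abs_def])
      also have "\<dots> = y" unfolding py[symmetric] by (rule the_inv_into_f_f[OF injp yI])
      also have "\<dots> = Amean I f n x l" by (simp add: Amean_def y_def Sf_def S_def)
      finally show "Bmean I g f n x l = Amean I f n x l" .
    qed
  qed
qed

lemma sum_if_last:
  assumes "1 \<le> n"
  shows "(\<Sum>i<n. (if i < n - 1 then A else B)) = real (n - 1) * A + (B::real)"
proof -
  obtain m where m: "n = Suc m" using assms by (cases n) auto
  have "(\<Sum>i<Suc m. (if i < m then A else B)) = (\<Sum>i<m. (if i < m then A else B)) + B"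
    by simp
  also have "(\<Sum>i<m. (if i < m then A else B)) = (\<Sum>i<m. A)" by (rule sum.cong) auto
  finally show ?thesis by (simp add: m)
qed

lemma iii_imp_v:
  fixes I :: "real set" and f g :: "real \<Rightarrow> real"
  assumes III: "stmt_iii I f g"
  shows "stmt_v I f g"
proof -
  obtain h n where hc: "cont_strict_mono I h" and n3: "n \<ge> 3"
    and heq: "\<And>x. in_power I n x \<Longrightarrow> Bmean I g f n x (\<lambda>_. 1) = Amean I h n x (\<lambda>_. 1)"
    using III unfolding stmt_iii_def by blast
  define t where "t = real (n - 1) / real n"
  have nr: "real (n - 1) = real n - 1" using n3 by simp
  have npos: "real n > 0" using n3 by simp
  have t: "t \<in> {0<..<1/2} \<union> {1/2<..<1}"
  proof -
    have "1/2 < t" using n3 unfolding t_def nr by (simp add: field_simps)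
    moreover have "t < 1" using npos unfolding t_def nr by simp
    ultimately show ?thesis by auto
  qed
  have ts: "1 - t = 1 / real n" using npos unfolding t_def nr by (simp add: field_simps)
  show ?thesis unfolding stmt_v_def
  proof (intro exI conjI allI impI)
    show "t \<in> {0<..<1/2} \<union> {1/2<..<1}" by (rule t)
    show "cont_strict_mono I h" by (rule hc)
    fix x assume x: "in_power I 2 x"
    define X where "X i = (if i < n - 1 then x 0 else x 1)" for i
    have XI: "in_power I n X" using x by (auto simp: in_power_def X_def)
    have e: "Bmean I g f n X (\<lambda>_. 1) = Amean I h n X (\<lambda>_. 1)" by (rule heq[OF XI])
    have n1: "1 \<le> n" using n3 by simp
    have sg: "(\<Sum>i<n. 1 * g (X i)) = real (n-1) * g (x 0) + g (x 1)"
    proof -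
      have "(\<Sum>i<n. 1 * g (X i)) = (\<Sum>i<n. if i < n - 1 then g (x 0) else g (x 1))"
        by (rule sum.cong) (auto simp: X_def)
      then show ?thesis using sum_if_last[OF n1, of "g (x 0)" "g (x 1)"] by simp
    qed
    have sf: "(\<Sum>i<n. 1 * f (X i)) = real (n-1) * f (x 0) + f (x 1)"
    proof -
      have "(\<Sum>i<n. 1 * f (X i)) = (\<Sum>i<n. if i < n - 1 then f (x 0) else f (x 1))"
        by (rule sum.cong) (auto simp: X_def)
      then show ?thesis using sum_if_last[OF n1, of "f (x 0)" "f (x 1)"] by simp
    qed
    have sh: "(\<Sum>i<n. 1 * h (X i)) = real (n-1) * h (x 0) + h (x 1)"
    proof -
      have "(\<Sum>i<n. 1 * h (X i)) = (\<Sum>i<n. if i < n - 1 then h (x 0) else h (x 1))"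
        by (rule sum.cong) (auto simp: X_def)
      then show ?thesis using sum_if_last[OF n1, of "h (x 0)" "h (x 1)"] by simp
    qed
    have s1: "(\<Sum>i<n. (1::real)) = real n" by simp
    have r1: "(real (n-1) * g (x 0) + g (x 1)) / (real (n-1) * f (x 0) + f (x 1))
        = (t * g (x 0) + (1 - t) * g (x 1)) / (t * f (x 0) + (1 - t) * f (x 1))"
    proof -
      have "t * g (x 0) + (1 - t) * g (x 1) = (real (n-1) * g (x 0) + g (x 1)) / real n"
        unfolding ts unfolding t_def by (simp add: add_divide_distrib)
      moreover have "t * f (x 0) + (1 - t) * f (x 1) = (real (n-1) * f (x 0) + f (x 1)) / real n"
        unfolding ts unfolding t_def by (simp add: add_divide_distrib)
      ultimately show ?thesis using npos by simp
    qed
    have r2: "(real (n-1) * h (x 0) + h (x 1)) / real n = (t * h (x 0) + (1 - t) * h (x 1)) / (t + (1 - t))"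
    proof -
      have "t * h (x 0) + (1 - t) * h (x 1) = (real (n-1) * h (x 0) + h (x 1)) / real n"
        unfolding ts unfolding t_def by (simp add: add_divide_distrib)
      then show ?thesis by simp
    qed
    have "Bmean I g f 2 x (\<lambda>i. if i = 0 then t else 1 - t) = Bmean I g f n X (\<lambda>_. 1)"
      unfolding Bmean_def sum2 sg sf r1 by simp
    also have "\<dots> = Amean I h n X (\<lambda>_. 1)" by (rule e)
    also have "\<dots> = Amean I h 2 x (\<lambda>i. if i = 0 then t else 1 - t)"
      unfolding Amean_def sum2 sh s1 r2 by simp
    finally show "Bmean I g f 2 x (\<lambda>i. if i = 0 then t else 1 - t) = Amean I h 2 x (\<lambda>i. if i = 0 then t else 1 - t)" .
  qed
qed

lemma i_imp_ii: "stmt_i I f g \<Longrightarrow> stmt_ii I f g"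
  unfolding stmt_i_def stmt_ii_def Lambda_def by fastforce

lemma ii_imp_iii: "stmt_ii I f g \<Longrightarrow> stmt_iii I f g"
proof -
  assume "stmt_ii I f g"
  then obtain h where "cont_strict_mono I h"
    "\<forall>n\<ge>1. \<forall>x. in_power I n x \<longrightarrow> Bmean I g f n x (\<lambda>_. 1) = Amean I h n x (\<lambda>_. 1)"
    unfolding stmt_ii_def by blast
  then show "stmt_iii I f g" unfolding stmt_iii_def
    by (intro exI[of _ h] exI[of _ "3::nat"]) auto
qed

lemma i_imp_iv: "stmt_i I f g \<Longrightarrow> stmt_iv I f g"
  unfolding stmt_i_def stmt_iv_def by fastforce

lemma iv_imp_v: "stmt_iv I f g \<Longrightarrow> stmt_v I f g"
proof -
  assume "stmt_iv I f g"
  then obtain h where hc: "cont_strict_mono I h" and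
    heq: "\<And>x l. in_power I 2 x \<and> Lambda 2 l \<Longrightarrow> Bmean I g f 2 x l = Amean I h 2 x l"
    unfolding stmt_iv_def by blast
  have L: "Lambda 2 (\<lambda>i. if i = 0 then 1/3 else 1 - 1/3)"
    unfolding Lambda_def sum2 by auto
  show "stmt_v I f g" unfolding stmt_v_def
    by (rule exI[of _ "1/3"], rule exI[of _ h]) (use hc heq L in auto)
qed

lemma const_deriv_zero:
  fixes k :: "real \<Rightarrow> real"
  assumes "(k has_real_derivative D) (at x)" "open I" "x \<in> I" "\<And>y. y \<in> I \<Longrightarrow> k y = c"
  shows "D = 0"
proof -
  have "((\<lambda>_. c) has_real_derivative D) (at x)"
    by (rule has_field_derivative_transform_within_open[OF assms(1,2,3)]) (use assms(4) in auto)
  moreover have "((\<lambda>_. c) has_real_derivative 0) (at x)" by simp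
  ultimately show ?thesis using DERIV_unique by blast
qed

lemma B2_vi_vii:
  fixes I :: "real set" and f g :: "real \<Rightarrow> real"
  assumes Iopen: "open I" and Iint: "is_interval I" and Ine: "I \<noteq> {}" and B: "B2 I f g"
  shows "stmt_vi I f g \<longleftrightarrow> stmt_vii I f g"
proof -
  define f1 where "f1 = deriv f"
  define f2 where "f2 = deriv f1"
  define g1 where "g1 = deriv g"
  define g2 where "g2 = deriv g1"
  have fpos: "\<And>x. x \<in> I \<Longrightarrow> f x > 0" using B by (simp add: B2_def)
  have Df: "(f has_real_derivative f1 x) (at x)" if "x \<in> I" for x
    using B that unfolding B2_def C2_on_def f1_def by (simp add: DERIV_deriv_iff_real_differentiable)
  have Dg: "(g has_real_derivative g1 x) (at x)" if "x \<in> I" for x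
    using B that unfolding B2_def C2_on_def g1_def by (simp add: DERIV_deriv_iff_real_differentiable)
  have Df1: "(f1 has_real_derivative f2 x) (at x)" if "x \<in> I" for x
    using B that unfolding B2_def C2_on_def f2_def f1_def by (simp add: DERIV_deriv_iff_real_differentiable)
  have Dg1: "(g1 has_real_derivative g2 x) (at x)" if "x \<in> I" for x
    using B that unfolding B2_def C2_on_def g2_def g1_def by (simp add: DERIV_deriv_iff_real_differentiable)
  have W10: "W 1 0 f g x = f1 x * g x - f x * g1 x" for x by (simp add: W_def f1_def g1_def)
  have W21: "W 2 1 f g x = f2 x * g1 x - f1 x * g2 x" for x
    by (simp add: W_def f1_def g1_def f2_def g2_def numeral_2_eq_2)
  have W10nz: "f1 x * g x - f x * g1 x \<noteq> 0" if x: "x \<in> I" for x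
  proof
    assume h: "f1 x * g x - f x * g1 x = 0"
    have "((\<lambda>t. g t / f t) has_real_derivative (g1 x * f x - g x * f1 x) / (f x * f x)) (at x)"
      by (rule DERIV_divide[OF Dg[OF x] Df[OF x]]) (use fpos[OF x] in simp)
    then have "deriv (\<lambda>t. g t / f t) x = (g1 x * f x - g x * f1 x) / (f x * f x)" by (rule DERIV_imp_deriv)
    also have "\<dots> = 0" using h by (simp add: algebra_simps)
    moreover have "deriv (\<lambda>t. g t / f t) x \<noteq> 0" using B x unfolding B2_def by blast
    ultimately show False by simp
  qed
  have Psi0: "Psi f g x = 0 \<longleftrightarrow> f2 x * g1 x - f1 x * g2 x = 0" if "x \<in> I" for x
    using W10nz[OF that] unfolding Psi_def W10 W21 by auto
  show ?thesis
  proof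
    assume "stmt_vi I f g"
    then obtain a b where ab: "\<And>x. x \<in> I \<Longrightarrow> a * f x + b * g x = 1" unfolding stmt_vi_def by blast
    have ab0: "a \<noteq> 0 \<or> b \<noteq> 0" using ab Ine by fastforce
    have d1: "a * f1 x + b * g1 x = 0" if x: "x \<in> I" for x
    proof (rule const_deriv_zero[OF _ Iopen x])
      show "((\<lambda>y. a * f y + b * g y) has_real_derivative a * f1 x + b * g1 x) (at x)"
        using Df[OF x] Dg[OF x] by (auto intro!: derivative_eq_intros)
      show "\<And>y. y \<in> I \<Longrightarrow> a * f y + b * g y = 1" by (rule ab)
    qed
    have d2: "a * f2 x + b * g2 x = 0" if x: "x \<in> I" for x
    proof (rule const_deriv_zero[OF _ Iopen x])
      show "((\<lambda>y. a * f1 y + b * g1 y) has_real_derivative a * f2 x + b * g2 x) (at x)"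
        using Df1[OF x] Dg1[OF x] by (auto intro!: derivative_eq_intros)
      show "\<And>y. y \<in> I \<Longrightarrow> a * f1 y + b * g1 y = 0" by (rule d1)
    qed
    show "stmt_vii I f g" unfolding stmt_vii_def
    proof
      fix x assume x: "x \<in> I"
      have e1: "a * (f2 x * g1 x - f1 x * g2 x) = 0"
      proof -
        have "a * (f2 x * g1 x - f1 x * g2 x) = (a * f2 x) * g1 x - (a * f1 x) * g2 x" by (simp add: algebra_simps)
        also have "\<dots> = (- (b * g2 x)) * g1 x - (- (b * g1 x)) * g2 x"
        proof -
          have h1: "a * f1 x = - (b * g1 x)" and h2: "a * f2 x = - (b * g2 x)" using d1[OF x] d2[OF x] by linarith+
          show ?thesis by (simp only: h1 h2)
        qed
        also have "\<dots> = 0" by (simp add: algebra_simps)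
        finally show ?thesis .
      qed
      have e2: "b * (f2 x * g1 x - f1 x * g2 x) = 0"
      proof -
        have "b * (f2 x * g1 x - f1 x * g2 x) = f2 x * (b * g1 x) - f1 x * (b * g2 x)" by (simp add: algebra_simps)
        also have "\<dots> = f2 x * (- (a * f1 x)) - f1 x * (- (a * f2 x))"
        proof -
          have h1: "b * g1 x = - (a * f1 x)" and h2: "b * g2 x = - (a * f2 x)" using d1[OF x] d2[OF x] by linarith+
          show ?thesis by (simp only: h1 h2)
        qed
        also have "\<dots> = 0" by (simp add: algebra_simps)
        finally show ?thesis .
      qed
      have "f2 x * g1 x - f1 x * g2 x = 0" using e1 e2 ab0 by auto
      then show "Psi f g x = 0" using Psi0[OF x] by simp
    qed
  next
    assume "stmt_vii I f g"
    then have W0: "f2 x * g1 x - f1 x * g2 x = 0" if "x \<in> I" for x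
      using Psi0[OF that] that unfolding stmt_vii_def by blast
    obtain x0 where x0: "x0 \<in> I" using Ine by blast
    define p where "p = g1 x0"
    define q where "q = - f1 x0"
    define k where "k y = p * f1 y + q * g1 y" for y
    define N where "N y = f1 y ^ 2 + g1 y ^ 2" for y
    have Npos: "N y > 0" if "y \<in> I" for y
    proof -
      have "f1 y \<noteq> 0 \<or> g1 y \<noteq> 0" using W10nz[OF that] by auto
      then show ?thesis unfolding N_def by (auto simp: add_pos_nonneg add_nonneg_pos)
    qed
    have Z: "((\<lambda>y. k y ^ 2 / N y) has_real_derivative 0) (at y)" if y: "y \<in> I" for y
    proof -
      have dk: "(k has_real_derivative p * f2 y + q * g2 y) (at y)"
        unfolding k_def[abs_def] using Df1[OF y] Dg1[OF y] by (auto intro!: derivative_eq_intros)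
      have dN: "(N has_real_derivative 2 * f1 y * f2 y + 2 * g1 y * g2 y) (at y)"
        unfolding N_def[abs_def] using Df1[OF y] Dg1[OF y] by (auto intro!: derivative_eq_intros)
      have dk2: "((\<lambda>y. k y ^ 2) has_real_derivative 2 * k y * (p * f2 y + q * g2 y)) (at y)"
        using dk by (auto intro!: derivative_eq_intros)
      have D: "((\<lambda>y. k y ^ 2 / N y) has_real_derivative
          ((2 * k y * (p * f2 y + q * g2 y)) * N y - k y ^ 2 * (2 * f1 y * f2 y + 2 * g1 y * g2 y)) / (N y * N y)) (at y)"
        by (rule DERIV_divide[OF dk2 dN]) (use Npos[OF y] in simp)
      have "(2 * k y * (p * f2 y + q * g2 y)) * N y - k y ^ 2 * (2 * f1 y * f2 y + 2 * g1 y * g2 y)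
          = 2 * k y * (p * g1 y - q * f1 y) * (f2 y * g1 y - f1 y * g2 y)"
        unfolding k_def N_def power2_eq_square by algebra
      also have "\<dots> = 0" using W0[OF y] by simp
      finally show ?thesis using D by simp
    qed
    have cvx: "convex I" using Iint is_interval_convex_1 by blast
    have "\<exists>c. \<forall>y\<in>I. k y ^ 2 / N y = c"
      by (rule has_field_derivative_zero_constant[OF cvx]) (rule has_field_derivative_at_within[OF Z])
    then obtain c0 where c0: "\<And>y. y \<in> I \<Longrightarrow> k y ^ 2 / N y = c0" by blast
    have "k x0 = 0" by (simp add: k_def p_def q_def)
    then have "c0 = 0" using c0[OF x0] by simp
    then have k0: "k y = 0" if "y \<in> I" for y using c0[OF that] Npos[OF that] by simp
    have L: "((\<lambda>y. p * f y + q * g y) has_real_derivative 0) (at y within I)" if y: "y \<in> I" for y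
    proof -
      have "((\<lambda>y. p * f y + q * g y) has_real_derivative k y) (at y)"
        unfolding k_def using Df[OF y] Dg[OF y] by (auto intro!: derivative_eq_intros)
      then show ?thesis using k0[OF y] by (simp add: has_field_derivative_at_within)
    qed
    have "\<exists>c. \<forall>y\<in>I. p * f y + q * g y = c"
      by (rule has_field_derivative_zero_constant[OF cvx]) (rule L)
    then obtain c where c: "\<And>y. y \<in> I \<Longrightarrow> p * f y + q * g y = c" by blast
    have cnz: "c \<noteq> 0"
    proof
      assume "c = 0"
      then have e0: "p * f x0 + q * g x0 = 0" using c[OF x0] by simp
      have e1: "p * f1 x0 + q * g1 x0 = 0" using k0[OF x0] by (simp add: k_def)
      have pq: "p \<noteq> 0 \<or> q \<noteq> 0" using Npos[OF x0] by (auto simp: N_def p_def q_def)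
      have "p * (f1 x0 * g x0 - f x0 * g1 x0) = 0"
      proof -
        have "p * (f1 x0 * g x0 - f x0 * g1 x0) = (p * f1 x0) * g x0 - (p * f x0) * g1 x0" by (simp add: algebra_simps)
        also have "\<dots> = (- (q * g1 x0)) * g x0 - (- (q * g x0)) * g1 x0"
        proof -
          have h1: "p * f1 x0 = - (q * g1 x0)" and h2: "p * f x0 = - (q * g x0)" using e0 e1 by linarith+
          show ?thesis by (simp only: h1 h2)
        qed
        finally show ?thesis by (simp add: algebra_simps)
      qed
      moreover have "q * (f1 x0 * g x0 - f x0 * g1 x0) = 0"
      proof -
        have "q * (f1 x0 * g x0 - f x0 * g1 x0) = f1 x0 * (q * g x0) - f x0 * (q * g1 x0)" by (simp add: algebra_simps)
        also have "\<dots> = f1 x0 * (- (p * f x0)) - f x0 * (- (p * f1 x0))"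
        proof -
          have h1: "q * g x0 = - (p * f x0)" and h2: "q * g1 x0 = - (p * f1 x0)" using e0 e1 by linarith+
          show ?thesis by (simp only: h1 h2)
        qed
        finally show ?thesis by (simp add: algebra_simps)
      qed
      ultimately show False using pq W10nz[OF x0] by auto
    qed
    show "stmt_vi I f g" unfolding stmt_vi_def
    proof (intro exI ballI)
      fix x assume "x \<in> I"
      then show "(p / c) * f x + (q / c) * g x = 1" using c cnz by (simp add: add_divide_distrib[symmetric] mult.commute)
    qed
  qed
qed


theorem theorem3p4:
  fixes I :: "real set" and f g :: "real \<Rightarrow> real"
  assumes "is_interval I" and "open I" and "I \<noteq> {}"
    and "B0 I f g"
  shows "(stmt_i I f g \<longleftrightarrow> stmt_ii I f g) \<and> (stmt_ii I f g \<longleftrightarrow> stmt_iii I f g)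
       \<and> (stmt_iii I f g \<longleftrightarrow> stmt_iv I f g) \<and> (stmt_iv I f g \<longleftrightarrow> stmt_v I f g)
       \<and> (stmt_v I f g \<longleftrightarrow> stmt_vi I f g)
       \<and> (B2 I f g \<longrightarrow> (stmt_vi I f g \<longleftrightarrow> stmt_vii I f g))"
proof -
  have a: "stmt_i I f g \<Longrightarrow> stmt_ii I f g" by (rule i_imp_ii)
  have b: "stmt_ii I f g \<Longrightarrow> stmt_iii I f g" by (rule ii_imp_iii)
  have c: "stmt_iii I f g \<Longrightarrow> stmt_v I f g" by (rule iii_imp_v)
  have d: "stmt_v I f g \<Longrightarrow> stmt_vi I f g" by (rule v_imp_vi[OF assms])
  have e: "stmt_vi I f g \<Longrightarrow> stmt_i I f g" by (rule vi_imp_i[OF assms(1,4)])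
  have f: "stmt_i I f g \<Longrightarrow> stmt_iv I f g" by (rule i_imp_iv)
  have g: "stmt_iv I f g \<Longrightarrow> stmt_v I f g" by (rule iv_imp_v)
  have h: "B2 I f g \<Longrightarrow> (stmt_vi I f g \<longleftrightarrow> stmt_vii I f g)" by (rule B2_vi_vii[OF assms(2,1,3)])
  show ?thesis using a b c d e f g h by blast
qed

end
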